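(* Let $G_H$ be a finite undirected multigraph (parallel edges allowed, no self-loops) with vertex set $V$, whose edge set is partitioned as $E = S \sqcup S^c$ into secure edges $S$ and insecure edges $S^c$, and let $0 < p_J^{S^c} \le p_J^{S} \le p_I$ be real costs. Assign weight $p_J^{S}$ to every secure edge and weight $p_J^{S^c}$ to every insecure edge, and let $C^*$ be a cut of minimum total weight among all cuts of $G_H$ containing at least one insecure edge. Then the attack $(C^*, J, I)$ with $I=\{e\}$ for some insecure edge $e\in C^*$ and $J = C^*\setminus\{e\}$ is an optimal (minimum-cost) hidden generalized attack.
   Context: For a nonempty proper subset $U \subsetneq V$, the cut $\delta(U)$ is the set of edges with exactly one endpoint in $U$; a cut of $G_H$ is any set of this form. ($G_H$ models a power grid's measurement graph: vertices are buses plus a reference bus, edges are measurements.) The costs are: $p_J^{S^c}$ per jammed insecure edge, $p_J^S$ per jammed secure edge, $p_I$ per insecure edge with injected data. A generalized attack is a triple $(C,J,I)$ where $C$ is a cut, $J \subseteq C$ is the set of jammed edges, and $I \subseteq (C \cap S^c)\setminus J$ is a nonempty set of injected edges; its cost is $p_J^{S}|J\cap S| + p_J^{S^c}|J \cap S^c| + p_I |I|$. The attack is hidden if $I \cup J = C$. An optimal hidden generalized attack is a hidden generalized attack of minimum cost among all hidden generalized attacks. *)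

theory Defs
  imports Complex_Main
begin

text \<open>A finite undirected multigraph: vertex set V, edge set E (edges are abstract
 objects, so parallel edges are allowed), each edge e has endpoints src e and tgt e
 (orientation irrelevant), no self-loops.\<close>

definition multigraph :: "'v set \<Rightarrow> 'e set \<Rightarrow> ('e \<Rightarrow> 'v) \<Rightarrow> ('e \<Rightarrow> 'v) \<Rightarrow> bool" where
  "multigraph V E src tgt \<longleftrightarrow> finite V \<and> finite E \<and>
     (\<forall>e\<in>E. src e \<in> V \<and> tgt e \<in> V \<and> src e \<noteq> tgt e)"

definition cut_set :: "'e set \<Rightarrow> ('e \<Rightarrow> 'v) \<Rightarrow> ('e \<Rightarrow> 'v) \<Rightarrow> 'v set \<Rightarrow> 'e set" where
  "cut_set E src tgt U = {e\<in>E. (src e \<in> U) \<noteq> (tgt e \<in> U)}"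

definition is_cut :: "'v set \<Rightarrow> 'e set \<Rightarrow> ('e \<Rightarrow> 'v) \<Rightarrow> ('e \<Rightarrow> 'v) \<Rightarrow> 'e set \<Rightarrow> bool" where
  "is_cut V E src tgt C \<longleftrightarrow> (\<exists>U. U \<noteq> {} \<and> U \<subset> V \<and> C = cut_set E src tgt U)"

definition gen_attack :: "'v set \<Rightarrow> 'e set \<Rightarrow> ('e \<Rightarrow> 'v) \<Rightarrow> ('e \<Rightarrow> 'v) \<Rightarrow> 'e set
    \<Rightarrow> 'e set \<Rightarrow> 'e set \<Rightarrow> 'e set \<Rightarrow> bool" where
  "gen_attack V E src tgt S C J I \<longleftrightarrow> is_cut V E src tgt C \<and> J \<subseteq> C \<and>
     I \<subseteq> (C \<inter> (E - S)) - J \<and> I \<noteq> {}"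

definition hidden_gen_attack :: "'v set \<Rightarrow> 'e set \<Rightarrow> ('e \<Rightarrow> 'v) \<Rightarrow> ('e \<Rightarrow> 'v) \<Rightarrow> 'e set
    \<Rightarrow> 'e set \<Rightarrow> 'e set \<Rightarrow> 'e set \<Rightarrow> bool" where
  "hidden_gen_attack V E src tgt S C J I \<longleftrightarrow> gen_attack V E src tgt S C J I \<and> I \<union> J = C"

definition attack_cost :: "'e set \<Rightarrow> 'e set \<Rightarrow> real \<Rightarrow> real \<Rightarrow> real \<Rightarrow> 'e set \<Rightarrow> 'e set \<Rightarrow> real" where
  "attack_cost E S pJS pJSc pI J I =
     pJS * real (card (J \<inter> S)) + pJSc * real (card (J \<inter> (E - S))) + pI * real (card I)"

definition optimal_hidden_gen_attack :: "'v set \<Rightarrow> 'e set \<Rightarrow> ('e \<Rightarrow> 'v) \<Rightarrow> ('e \<Rightarrow> 'v) \<Rightarrow> 'e set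
    \<Rightarrow> real \<Rightarrow> real \<Rightarrow> real \<Rightarrow> 'e set \<Rightarrow> 'e set \<Rightarrow> 'e set \<Rightarrow> bool" where
  "optimal_hidden_gen_attack V E src tgt S pJS pJSc pI C J I \<longleftrightarrow>
     hidden_gen_attack V E src tgt S C J I \<and>
     (\<forall>C' J' I'. hidden_gen_attack V E src tgt S C' J' I' \<longrightarrow>
        attack_cost E S pJS pJSc pI J I \<le> attack_cost E S pJS pJSc pI J' I')"

definition cut_weight :: "'e set \<Rightarrow> real \<Rightarrow> real \<Rightarrow> 'e set \<Rightarrow> real" where
  "cut_weight S pJS pJSc C = (\<Sum>e\<in>C. if e \<in> S then pJS else pJSc)"

end

theory Submission
  imports Defs
begin

lemma cw_split:
  assumes "finite C"
  shows "cut_weight S pJS pJSc C = pJS * real (card (C \<inter> S)) + pJSc * real (card (C - S))"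
proof -
  have "cut_weight S pJS pJSc C = (\<Sum>e\<in>C \<inter> S. if e \<in> S then pJS else pJSc) + (\<Sum>e\<in>C - S. if e \<in> S then pJS else pJSc)"
    unfolding cut_weight_def using assms sum.union_disjoint[of "C \<inter> S" "C - S" "\<lambda>e. if e \<in> S then pJS else pJSc"]
    by (simp add: Int_Diff_Un Int_Diff_disjoint)
  also have "\<dots> = pJS * real (card (C \<inter> S)) + pJSc * real (card (C - S))" by simp
  finally show ?thesis .
qed

lemma cut_sub: "is_cut V E src tgt C \<Longrightarrow> C \<subseteq> E"
  unfolding is_cut_def cut_set_def by auto

theorem theorem4:
  fixes V :: "'v set" and E :: "'e set" and src tgt :: "'e \<Rightarrow> 'v"
    and S :: "'e set" and pJS pJSc pI :: real and Cstar :: "'e set" and e :: 'e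
  assumes "multigraph V E src tgt"
    and "S \<subseteq> E"
    and "0 < pJSc" and "pJSc \<le> pJS" and "pJS \<le> pI"
    and "is_cut V E src tgt Cstar" and "Cstar \<inter> (E - S) \<noteq> {}"
    and "\<forall>C. is_cut V E src tgt C \<and> C \<inter> (E - S) \<noteq> {} \<longrightarrow>
            cut_weight S pJS pJSc Cstar \<le> cut_weight S pJS pJSc C"
    and "e \<in> Cstar \<inter> (E - S)"
  shows "optimal_hidden_gen_attack V E src tgt S pJS pJSc pI Cstar (Cstar - {e}) {e}"
proof -
  have fE: "finite E" using assms(1) unfolding multigraph_def by auto
  have CsE: "Cstar \<subseteq> E" using cut_sub assms(6) by blast
  have fC: "finite Cstar" using CsE fE finite_subset by blast
  have h: "hidden_gen_attack V E src tgt S Cstar (Cstar - {e}) {e}"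
    unfolding hidden_gen_attack_def gen_attack_def using assms(6,9) by auto
  have c1: "(Cstar - {e}) \<inter> S = Cstar \<inter> S" using assms(9) by auto
  have c2: "(Cstar - {e}) \<inter> (E - S) = (Cstar - S) - {e}" using CsE by auto
  have c3: "card ((Cstar - S) - {e}) = card (Cstar - S) - 1" using assms(9) fC by simp
  have c4: "card (Cstar - S) \<ge> 1" proof -
    have "e \<in> Cstar - S" using assms(9) by auto
    thus ?thesis using fC by (metis One_nat_def Suc_leI card_gt_0_iff empty_iff finite_Diff)
  qed
  have cost: "attack_cost E S pJS pJSc pI (Cstar - {e}) {e} = cut_weight S pJS pJSc Cstar - pJSc + pI"
    unfolding attack_cost_def cw_split[OF fC] c1 c2 c3 using c4 by (simp add: of_nat_diff algebra_simps)
  show ?thesis unfolding optimal_hidden_gen_attack_def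
  proof (intro conjI h allI impI)
    fix C' J' I' assume H: "hidden_gen_attack V E src tgt S C' J' I'"
    hence cut: "is_cut V E src tgt C'" and J'C: "J' \<subseteq> C'" and I'C: "I' \<subseteq> (C' \<inter> (E - S)) - J'"
      and ne: "I' \<noteq> {}" and un: "I' \<union> J' = C'"
      unfolding hidden_gen_attack_def gen_attack_def by auto
    have C'E: "C' \<subseteq> E" using cut_sub cut by blast
    have fC': "finite C'" using C'E fE finite_subset by blast
    have fI: "finite I'" using I'C fC' finite_subset by blast
    have fJ: "finite J'" using J'C fC' finite_subset by blast
    have ins: "C' \<inter> (E - S) \<noteq> {}" using I'C ne by blast
    have wle: "cut_weight S pJS pJSc Cstar \<le> cut_weight S pJS pJSc C'" using assms(8) cut ins by blast
    have d1: "C' \<inter> S = J' \<inter> S" using un I'C by auto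
    have d2: "C' - S = (J' \<inter> (E - S)) \<union> I'" using un I'C C'E by auto
    have d3: "card (C' - S) = card (J' \<inter> (E - S)) + card I'"
      unfolding d2 using I'C fI fJ by (subst card_Un_disjoint) auto
    have ci: "card I' \<ge> 1" using ne fI by (simp add: Suc_le_eq card_gt_0_iff)
    have "attack_cost E S pJS pJSc pI J' I' = cut_weight S pJS pJSc C' + (pI - pJSc) * real (card I')"
      unfolding attack_cost_def cw_split[OF fC'] d1 d3 by (simp add: algebra_simps)
    moreover have "(pI - pJSc) * real (card I') \<ge> (pI - pJSc)"
      proof -
      have "real (card I') \<ge> 1" using ci by simp
      moreover have "pI - pJSc \<ge> 0" using assms(4,5) by simp
      ultimately show ?thesis using mult_left_mono[of 1 "real (card I')" "pI - pJSc"] by simp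
    qed
    ultimately show "attack_cost E S pJS pJSc pI (Cstar - {e}) {e} \<le> attack_cost E S pJS pJSc pI J' I'"
      using cost wle by linarith
  qed
qed

end
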